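(* Let $G$ be a topological rough group and $X$ a rough $G$-space with (left, resp. right) rough action $\mu$. Then for every $g\in G$, the left (resp. right) transformation map $L_g:\overline{X}\to\overline{X}$, $L_g(x)=gx$ (resp. $R_g:\overline{X}\to\overline{X}$, $R_g(x)=xg$) is a homeomorphism of $\overline{X}$.
   Context: An approximation space is a pair $(U,R)$ with $U$ a set and $R$ an equivalence relation on $U$; for $X\subseteq U$, $\overline{X}=\bigcup\{[x]_R : [x]_R\cap X\neq\emptyset\}$. Let $U$ carry a binary operation written $xy$. A subset $G\subseteq U$ is a rough group if: (1) $xy\in\overline{G}$ for all $x,y\in G$; (2) $(xy)z=x(yz)$ for all $x,y,z\in\overline{G}$; (3) there is $e\in\overline{G}$ with $xe=ex=x$ for all $x\in G$; (4) for every $x\in G$ there is $y\in G$ with $xy=yx=e$ (written $x^{-1}$). A topological rough group is a rough group $G$ with a topology $\tau$ on $\overline{G}$, $\tau_G$ the subspace topology on $G$, such that $G\times G\to\overline{G}$, $(x,y)\mapsto xy$, is continuous (product of $\tau_G$ to $\tau$) and $G\to G$, $x\mapsto x^{-1}$, is continuous for $\tau_G$. Let $X\subseteq U$ with $\overline{X}$ carrying a topology (and $X$ the subspace topology). A left rough action of $G$ on $X$ is a continuous map $\mu:\overline{G}\times\overline{X}\to\overline{X}$, written $\mu(g,x)=gx$, such that $g(g'x)=(gg')x$ for all $g,g'\in\overline{G}$, $x\in\overline{X}$, and $ex=x$ for all $x\in\overline{X}$, where $e$ is the rough identity. A right rough action is a continuous map $\overline{X}\times\overline{G}\to\overline{X}$,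 $(x,g)\mapsto xg$, with $(xg)g'=x(gg')$ and $xe=x$. $X$ with such an action is called a rough $G$-space. *)

theory Defs
  imports "HOL-Analysis.Analysis"
begin

definition approx_space_op :: "'a set \<Rightarrow> ('a \<times> 'a) set \<Rightarrow> ('a \<Rightarrow> 'a \<Rightarrow> 'a) \<Rightarrow> bool" where
  "approx_space_op U R bop \<longleftrightarrow> equiv U R \<and> (\<forall>x\<in>U. \<forall>y\<in>U. bop x y \<in> U)"

definition upper_approx :: "'a set \<Rightarrow> ('a \<times> 'a) set \<Rightarrow> 'a set \<Rightarrow> 'a set" where
  "upper_approx U R X = \<Union>{R `` {x} | x. x \<in> U \<and> R `` {x} \<inter> X \<noteq> {}}"

definition rough_group :: "'a set \<Rightarrow> ('a \<times> 'a) set \<Rightarrow> ('a \<Rightarrow> 'a \<Rightarrow> 'a) \<Rightarrow> 'a set \<Rightarrow> 'a \<Rightarrow> bool" where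
  "rough_group U R bop G e \<longleftrightarrow>
     approx_space_op U R bop \<and> G \<subseteq> U \<and>
     (\<forall>x\<in>G. \<forall>y\<in>G. bop x y \<in> upper_approx U R G) \<and>
     (\<forall>x\<in>upper_approx U R G. \<forall>y\<in>upper_approx U R G. \<forall>z\<in>upper_approx U R G.
         bop (bop x y) z = bop x (bop y z)) \<and>
     e \<in> upper_approx U R G \<and> (\<forall>x\<in>G. bop x e = x \<and> bop e x = x) \<and>
     (\<forall>x\<in>G. \<exists>y\<in>G. bop x y = e \<and> bop y x = e)"

text \<open>The rough inverse x^{-1} (unique in a rough group).\<close>
definition rough_inv :: "('a \<Rightarrow> 'a \<Rightarrow> 'a) \<Rightarrow> 'a set \<Rightarrow> 'a \<Rightarrow> 'a \<Rightarrow> 'a" where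
  "rough_inv bop G e x = (THE y. y \<in> G \<and> bop x y = e \<and> bop y x = e)"

definition topological_rough_group ::
  "'a set \<Rightarrow> ('a \<times> 'a) set \<Rightarrow> ('a \<Rightarrow> 'a \<Rightarrow> 'a) \<Rightarrow> 'a set \<Rightarrow> 'a \<Rightarrow> 'a topology \<Rightarrow> bool" where
  "topological_rough_group U R bop G e T \<longleftrightarrow>
     rough_group U R bop G e \<and> topspace T = upper_approx U R G \<and>
     continuous_map (prod_topology (subtopology T G) (subtopology T G)) T (\<lambda>(x, y). bop x y) \<and>
     continuous_map (subtopology T G) (subtopology T G) (rough_inv bop G e)"

definition rough_left_action ::
  "'a set \<Rightarrow> ('a \<times> 'a) set \<Rightarrow> ('a \<Rightarrow> 'a \<Rightarrow> 'a) \<Rightarrow> 'a set \<Rightarrow> 'a \<Rightarrow> 'a topology \<Rightarrow>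
   'a set \<Rightarrow> 'a topology \<Rightarrow> ('a \<Rightarrow> 'a \<Rightarrow> 'a) \<Rightarrow> bool" where
  "rough_left_action U R bop G e TG X TX act \<longleftrightarrow>
     continuous_map (prod_topology TG TX) TX (\<lambda>(g, x). act g x) \<and>
     (\<forall>g\<in>upper_approx U R G. \<forall>g'\<in>upper_approx U R G. \<forall>x\<in>upper_approx U R X.
        act g (act g' x) = act (bop g g') x) \<and>
     (\<forall>x\<in>upper_approx U R X. act e x = x)"

definition rough_right_action ::
  "'a set \<Rightarrow> ('a \<times> 'a) set \<Rightarrow> ('a \<Rightarrow> 'a \<Rightarrow> 'a) \<Rightarrow> 'a set \<Rightarrow> 'a \<Rightarrow> 'a topology \<Rightarrow>
   'a set \<Rightarrow> 'a topology \<Rightarrow> ('a \<Rightarrow> 'a \<Rightarrow> 'a) \<Rightarrow> bool" where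
  "rough_right_action U R bop G e TG X TX act \<longleftrightarrow>
     continuous_map (prod_topology TX TG) TX (\<lambda>(x, g). act x g) \<and>
     (\<forall>g\<in>upper_approx U R G. \<forall>g'\<in>upper_approx U R G. \<forall>x\<in>upper_approx U R X.
        act (act x g) g' = act x (bop g g')) \<and>
     (\<forall>x\<in>upper_approx U R X. act x e = x)"

end

theory Submission
  imports Defs
begin

lemma sub_upper:
  assumes "equiv U R" "G \<subseteq> U"
  shows "G \<subseteq> upper_approx U R G"
proof
  fix g assume g: "g \<in> G"
  then have "(g,g) \<in> R" using assms by (meson equiv_def refl_onD subsetD)
  then show "g \<in> upper_approx U R G" unfolding upper_approx_def using g assms by blast
qed

lemma cont_left:
  assumes "continuous_map (prod_topology TG TX) TX (\<lambda>(g, x). act g x)" "g \<in> topspace TG"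
  shows "continuous_map TX TX (\<lambda>x. act g x)"
proof -
  have "continuous_map TX (prod_topology TG TX) (\<lambda>x. (g, x))"
    using assms(2) by (simp add: continuous_map_paired)
  from continuous_map_compose[OF this assms(1)] show ?thesis by (simp add: o_def)
qed

lemma cont_right:
  assumes "continuous_map (prod_topology TX TG) TX (\<lambda>(x, g). act x g)" "g \<in> topspace TG"
  shows "continuous_map TX TX (\<lambda>x. act x g)"
proof -
  have "continuous_map TX (prod_topology TX TG) (\<lambda>x. (x, g))"
    using assms(2) by (simp add: continuous_map_paired)
  from continuous_map_compose[OF this assms(1)] show ?thesis by (simp add: o_def)
qed

theorem mainTheorem5:
  fixes U :: "'a set" and R :: "('a \<times> 'a) set" and bop :: "'a \<Rightarrow> 'a \<Rightarrow> 'a"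
    and G X :: "'a set" and e :: 'a and TG TX :: "'a topology"
    and actl actr :: "'a \<Rightarrow> 'a \<Rightarrow> 'a"
  assumes "topological_rough_group U R bop G e TG"
    and "X \<subseteq> U"
    and "topspace TX = upper_approx U R X"
  shows "(rough_left_action U R bop G e TG X TX actl \<longrightarrow>
            (\<forall>g\<in>G. homeomorphic_map TX TX (\<lambda>x. actl g x)))
       \<and> (rough_right_action U R bop G e TG X TX actr \<longrightarrow>
            (\<forall>g\<in>G. homeomorphic_map TX TX (\<lambda>x. actr x g)))"
proof -
  have rg: "rough_group U R bop G e" and top: "topspace TG = upper_approx U R G"
    using assms(1) unfolding topological_rough_group_def by auto
  have eq: "equiv U R" and GU: "G \<subseteq> U"
    and inv: "\<forall>x\<in>G. \<exists>y\<in>G. bop x y = e \<and> bop y x = e"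
    using rg unfolding rough_group_def approx_space_op_def by auto
  have sub: "G \<subseteq> topspace TG" using sub_upper[OF eq GU] top by simp
  show ?thesis
  proof (intro conjI impI ballI)
    fix g assume A: "rough_left_action U R bop G e TG X TX actl" and g: "g \<in> G"
    obtain h where h: "h \<in> G" "bop g h = e" "bop h g = e" using inv g by blast
    have c: "continuous_map (prod_topology TG TX) TX (\<lambda>(g, x). actl g x)"
      and comp: "\<forall>g\<in>upper_approx U R G. \<forall>g'\<in>upper_approx U R G. \<forall>x\<in>upper_approx U R X.
        actl g (actl g' x) = actl (bop g g') x"
      and ide: "\<forall>x\<in>upper_approx U R X. actl e x = x"
      using A unfolding rough_left_action_def by auto
    have gu: "g \<in> upper_approx U R G" "h \<in> upper_approx U R G" using sub g h top by auto
    have i1: "\<forall>x\<in>topspace TX. actl h (actl g x) = x" using comp ide gu h(3) assms(3) by metis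
    have i2: "\<forall>x\<in>topspace TX. actl g (actl h x) = x" using comp ide gu h(2) assms(3) by metis
    have "homeomorphic_maps TX TX (\<lambda>x. actl g x) (\<lambda>x. actl h x)"
      unfolding homeomorphic_maps_def
      using cont_left[OF c] gu top i1 i2 by auto
    then show "homeomorphic_map TX TX (\<lambda>x. actl g x)"
      using homeomorphic_map_maps by blast
  next
    fix g assume A: "rough_right_action U R bop G e TG X TX actr" and g: "g \<in> G"
    obtain h where h: "h \<in> G" "bop g h = e" "bop h g = e" using inv g by blast
    have c: "continuous_map (prod_topology TX TG) TX (\<lambda>(x, g). actr x g)"
      and comp: "\<forall>g\<in>upper_approx U R G. \<forall>g'\<in>upper_approx U R G. \<forall>x\<in>upper_approx U R X.
        actr (actr x g) g' = actr x (bop g g')"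
      and ide: "\<forall>x\<in>upper_approx U R X. actr x e = x"
      using A unfolding rough_right_action_def by auto
    have gu: "g \<in> upper_approx U R G" "h \<in> upper_approx U R G" using sub g h top by auto
    have i1: "\<forall>x\<in>topspace TX. actr (actr x g) h = x" using comp ide gu h(2) assms(3) by metis
    have i2: "\<forall>x\<in>topspace TX. actr (actr x h) g = x" using comp ide gu h(3) assms(3) by metis
    have "homeomorphic_maps TX TX (\<lambda>x. actr x g) (\<lambda>x. actr x h)"
      unfolding homeomorphic_maps_def
      using cont_right[OF c] gu top i1 i2 by auto
    then show "homeomorphic_map TX TX (\<lambda>x. actr x g)"
      using homeomorphic_map_maps by blast
  qed
qed

end
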